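(* Assume the two-layer linear setting below, Assumptions (A3) and (A4), $\lambda_1\ge2\lambda_2$, and the learning-rate condition $\eta<\frac{nd}{(d+1)\lambda_1}$. Let $c_5$ be a constant with $0<c_5<\min\{2\beta,\frac{d}{d+1}\}$, and suppose $$m>\frac{3\eta c_2}{\frac{2d}{d+1}-2c_5}\quad\text{and}\quad m>\frac{\eta c_2}{2\beta-c_5}.$$ Then there is a constant $C$, depending only on $c_5$, $\eta$ and $\lambda_1/n$, such that $\|D(t)\|\le C\sqrt{nm}$ for all $t$.
   Context: Two-layer linear setting. Let $m$ be even and let $d,n\ge1$. The data matrix is $X=[x_1,\dots,x_n]\in\mathbb R^{d\times n}$ and the labels are $Y\in\{-1,1\}^n$, so that $\|Y\|=\sqrt n$. The network is $f(x)=\frac1{\sqrt m}A^\top Wx$ with $A\in\mathbb R^m$ and $W\in\mathbb R^{m\times d}$, trained by gradient descent $$A(t+1)=A(t)-\tfrac{2\eta}{n\sqrt m}W(t)XD(t),\qquad W(t+1)=W(t)-\tfrac{2\eta}{n\sqrt m}A(t)D(t)^\top X^\top$$ from the symmetric initialization, which satisfies $W(0)^\top W(0)=\frac md I_d$ and $F(0)=0$. Here $F=\frac1{\sqrt m}X^\top W^\top A$ is the output vector and $D=F-Y$ the residual. Define the Gram matrix $M(t)=\frac{2}{mn}\big(\|A(t)\|^2X^\top X+X^\top W(t)^\top W(t)X\big)$, the sharpness $\Lambda(t)=\lambda_{\max}(M(t))$, and $\Gamma(t)=\frac{2}{mn}\big(X^\top W(t)^\top W(t)X-\frac md X^\top X\big)$.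 $X^\top X$ has eigenvalues $\lambda_1\ge\lambda_2\ge\dots$, and $\lambda_1=\Theta(n)$. (A3): there is a constant $c_2>0$ with $\|\Gamma(t)\|\le c_2/m$ for all $t$. (A4): there is a constant $\beta>0$ with $\Lambda(t)\le\frac4\eta(1-\beta)$ for all $t$. *)

theory Defs
  imports "Jordan_Normal_Form.Matrix" "Jordan_Normal_Form.Char_Poly"
          "HOL-Computational_Algebra.Polynomial" "HOL-Library.Multiset"
begin

definition eigs_desc :: "real mat \<Rightarrow> real list" where
  "eigs_desc A = rev (sorted_list_of_multiset (proots (char_poly A)))"

(* k-th largest eigenvalue, 1-based: lam A 1 \<ge> lam A 2 \<ge> ...; 0 if k is out of range *)
definition lam :: "real mat \<Rightarrow> nat \<Rightarrow> real" where
  "lam A k = (if 1 \<le> k \<and> k \<le> length (eigs_desc A) then eigs_desc A ! (k - 1) else 0)"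

definition lambda_max :: "real mat \<Rightarrow> real" where
  "lambda_max A = lam A 1"

definition vnorm :: "real vec \<Rightarrow> real" where
  "vnorm v = sqrt (v \<bullet> v)"

definition opnorm :: "real mat \<Rightarrow> real" where
  "opnorm A = Sup {vnorm (A *\<^sub>v v) | v. v \<in> carrier_vec (dim_col A) \<and> vnorm v \<le> 1}"

definition outer :: "real vec \<Rightarrow> real vec \<Rightarrow> real mat" where
  "outer a b = mat (dim_vec a) (dim_vec b) (\<lambda>(i, j). a $ i * b $ j)"

definition Fout :: "nat \<Rightarrow> real mat \<Rightarrow> real mat \<Rightarrow> real vec \<Rightarrow> real vec" where
  "Fout m X W A = (1 / sqrt (real m)) \<cdot>\<^sub>v (transpose_mat X * transpose_mat W *\<^sub>v A)"

definition Resid :: "nat \<Rightarrow> real mat \<Rightarrow> real vec \<Rightarrow> real mat \<Rightarrow> real vec \<Rightarrow> real vec" where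
  "Resid m X Y W A = Fout m X W A - Y"

definition GramM :: "nat \<Rightarrow> nat \<Rightarrow> real mat \<Rightarrow> real mat \<Rightarrow> real vec \<Rightarrow> real mat" where
  "GramM m n X W A = (2 / (real m * real n)) \<cdot>\<^sub>m
     ((vnorm A)\<^sup>2 \<cdot>\<^sub>m (transpose_mat X * X) + transpose_mat X * transpose_mat W * W * X)"

definition GammaM :: "nat \<Rightarrow> nat \<Rightarrow> nat \<Rightarrow> real mat \<Rightarrow> real mat \<Rightarrow> real mat" where
  "GammaM m n d X W = (2 / (real m * real n)) \<cdot>\<^sub>m
     (transpose_mat X * transpose_mat W * W * X - (real m / real d) \<cdot>\<^sub>m (transpose_mat X * X))"

end

theory Submission
  imports Defs
begin


lemma sp_self_nonneg: "0 \<le> (v::real vec) \<bullet> v"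
  unfolding scalar_prod_def by (auto intro: sum_nonneg)

lemma vnorm_nonneg: "0 \<le> vnorm v"
  unfolding vnorm_def using sp_self_nonneg[of v] by simp

lemma vnorm_sq: "(vnorm v)^2 = v \<bullet> v"
  unfolding vnorm_def using sp_self_nonneg by simp

lemma cs_sq:
  fixes v w :: "real vec"
  assumes "v \<in> carrier_vec n" "w \<in> carrier_vec n"
  shows "(v \<bullet> w)^2 \<le> (v \<bullet> v) * (w \<bullet> w)"
proof -
  define a where "a = w \<bullet> w"
  define b where "b = v \<bullet> w"
  define c where "c = v \<bullet> v"
  have dv: "dim_vec v = n" "dim_vec w = n" using assms by auto
  have a: "a = (\<Sum>i=0..<n. w$i * w$i)" unfolding a_def scalar_prod_def dv ..
  have b: "b = (\<Sum>i=0..<n. v$i * w$i)" unfolding b_def scalar_prod_def dv ..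
  have c: "c = (\<Sum>i=0..<n. v$i * v$i)" unfolding c_def scalar_prod_def dv ..
  have "0 \<le> (\<Sum>i=0..<n. (a * v$i - b * w$i)^2)" by (auto intro: sum_nonneg)
  also have "\<dots> = (\<Sum>i=0..<n. a^2 * (v$i * v$i) - 2*a*b * (v$i * w$i) + b^2 * (w$i*w$i))"
    by (rule sum.cong, auto simp: power2_eq_square algebra_simps)
  also have "\<dots> = a^2 * c - 2*a*b*b + b^2 * a"
    unfolding a b c by (simp add: sum.distrib sum_subtractf sum_distrib_left)
  finally have *: "0 \<le> a * (a * c - b^2)" by (simp add: power2_eq_square algebra_simps)
  have a0: "0 \<le> a" unfolding a_def by (rule sp_self_nonneg)
  show ?thesis
  proof (cases "a = 0")
    case True
    have "\<forall>i\<in>{0..<n}. w$i * w$i = 0"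
      using True a by (subst sum_nonneg_eq_0_iff[symmetric]) auto
    hence "b = 0" unfolding b by auto
    thus ?thesis using True unfolding a_def b_def by simp
  next
    case False
    hence "0 < a" using a0 by simp
    with * have "0 \<le> a * c - b^2" by (simp add: zero_le_mult_iff)
    thus ?thesis unfolding a_def b_def c_def by (simp add: mult.commute)
  qed
qed

lemma cs:
  fixes v w :: "real vec"
  assumes "v \<in> carrier_vec n" "w \<in> carrier_vec n"
  shows "\<bar>v \<bullet> w\<bar> \<le> vnorm v * vnorm w"
proof -
  have "\<bar>v \<bullet> w\<bar> = sqrt ((v \<bullet> w)^2)" by simp
  also have "\<dots> \<le> sqrt ((v \<bullet> v) * (w \<bullet> w))" using cs_sq[OF assms] by (rule real_sqrt_le_mono)
  also have "\<dots> = vnorm v * vnorm w" unfolding vnorm_def by (simp add: real_sqrt_mult)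
  finally show ?thesis .
qed

lemma vnorm_triangle_minus:
  fixes v w :: "real vec"
  assumes "v \<in> carrier_vec n" "w \<in> carrier_vec n"
  shows "vnorm (v - w) \<le> vnorm v + vnorm w"
proof -
  have "(v - w) \<bullet> (v - w) = v \<bullet> v - 2 * (v \<bullet> w) + w \<bullet> w"
    using assms by (simp add: minus_scalar_prod_distrib[of _ n] scalar_prod_minus_distrib[of _ n]
        comm_scalar_prod[of w n v])
  also have "\<dots> \<le> (vnorm v + vnorm w)^2"
    using cs[OF assms] by (simp add: power2_sum vnorm_sq[symmetric])
  finally have "(vnorm (v - w))^2 \<le> (vnorm v + vnorm w)^2" by (simp add: vnorm_sq)
  thus ?thesis by (rule power2_le_imp_le) (simp add: vnorm_nonneg)
qed

definition fro :: "real mat \<Rightarrow> real" where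
  "fro B = (\<Sum>i=0..<dim_row B. row B i \<bullet> row B i)"

lemma fro_nonneg: "0 \<le> fro B"
  unfolding fro_def by (auto intro: sum_nonneg sp_self_nonneg)

lemma mat_vec_bound_sq:
  assumes B: "B \<in> carrier_mat r c" and x: "x \<in> carrier_vec c"
  shows "(B *\<^sub>v x) \<bullet> (B *\<^sub>v x) \<le> fro B * (x \<bullet> x)"
proof -
  have "(B *\<^sub>v x) \<bullet> (B *\<^sub>v x) = (\<Sum>i=0..<r. (row B i \<bullet> x)^2)"
    using B x unfolding scalar_prod_def[of "B *\<^sub>v x"] by (auto simp: power2_eq_square)
  also have "\<dots> \<le> (\<Sum>i=0..<r. (row B i \<bullet> row B i) * (x \<bullet> x))"
    by (rule sum_mono, rule cs_sq[of _ c], insert B x, auto)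
  also have "\<dots> = fro B * (x \<bullet> x)" using B unfolding fro_def by (simp add: sum_distrib_right)
  finally show ?thesis .
qed

lemma mat_vec_bound:
  assumes B: "B \<in> carrier_mat r c" and x: "x \<in> carrier_vec c"
  shows "vnorm (B *\<^sub>v x) \<le> sqrt (fro B) * vnorm x"
  using mat_vec_bound_sq[OF assms] unfolding vnorm_def
  by (metis real_sqrt_le_mono real_sqrt_mult)

lemma qf_abs_bound:
  assumes B: "B \<in> carrier_mat n n" and x: "x \<in> carrier_vec n"
  shows "\<bar>x \<bullet> (B *\<^sub>v x)\<bar> \<le> sqrt (fro B) * (x \<bullet> x)"
proof -
  have "\<bar>x \<bullet> (B *\<^sub>v x)\<bar> \<le> vnorm x * vnorm (B *\<^sub>v x)" using B x by (intro cs[of _ n]) auto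
  also have "\<dots> \<le> vnorm x * (sqrt (fro B) * vnorm x)"
    by (rule mult_left_mono[OF mat_vec_bound[OF B x] vnorm_nonneg])
  also have "\<dots> = sqrt (fro B) * (x \<bullet> x)" by (simp add: vnorm_sq[symmetric] power2_eq_square)
  finally show ?thesis .
qed

lemma smult_mat_mult_vec:
  assumes "A \<in> carrier_mat nr nc" "v \<in> carrier_vec nc"
  shows "((k::real) \<cdot>\<^sub>m A) *\<^sub>v v = k \<cdot>\<^sub>v (A *\<^sub>v v)"
  using assms by (intro eq_vecI) (auto simp: scalar_prod_def sum_distrib_left algebra_simps)

lemma char_matrix_mult:
  assumes N: "(N::real mat) \<in> carrier_mat n n" and y: "y \<in> carrier_vec n"
  shows "char_matrix N l *\<^sub>v y = N *\<^sub>v y - l \<cdot>\<^sub>v y"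
  using N y unfolding char_matrix_def
  by (subst add_mult_distrib_mat_vec[of _ n n], auto simp: smult_mat_mult_vec[of _ n n])

lemma sorted_max:
  assumes "x \<in># (M::real multiset)"
  shows "x \<le> rev (sorted_list_of_multiset M) ! 0" "1 \<le> length (rev (sorted_list_of_multiset M))"
proof -
  define L where "L = sorted_list_of_multiset M"
  have sL: "sorted L" unfolding L_def by simp
  have xL: "x \<in> set L" unfolding L_def using assms by simp
  then obtain i where i: "i < length L" "L ! i = x" by (auto simp: in_set_conv_nth)
  have ne: "L \<noteq> []" using xL by auto
  have "rev L ! 0 = L ! (length L - 1)" using ne by (simp add: rev_nth)
  moreover have "L ! i \<le> L ! (length L - 1)" using sL i by (intro sorted_nth_mono) auto
  ultimately show "x \<le> rev (sorted_list_of_multiset M) ! 0" using i unfolding L_def by simp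
  show "1 \<le> length (rev (sorted_list_of_multiset M))" using ne unfolding L_def
    by (cases "sorted_list_of_multiset M") auto
qed

lemma root_le_lam:
  assumes N: "(N::real mat) \<in> carrier_mat n n" and ev: "eigenvalue N l"
  shows "l \<le> lam N 1"
proof -
  have cp0: "char_poly N \<noteq> 0" using degree_monic_char_poly[OF N] by auto
  have "poly (char_poly N) l = 0" using eigenvalue_root_char_poly[OF N] ev by simp
  hence lm: "l \<in># proots (char_poly N)" using cp0 by simp
  from sorted_max[OF lm] show ?thesis unfolding lam_def eigs_desc_def by simp
qed

lemma lam_pos_eigen:
  assumes N: "(N::real mat) \<in> carrier_mat n n" and nz: "lam N 1 \<noteq> 0"
  shows "eigenvalue N (lam N 1)"
proof -
  have cp0: "char_poly N \<noteq> 0" using degree_monic_char_poly[OF N] by auto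
  have len: "1 \<le> length (eigs_desc N)" and l: "lam N 1 = eigs_desc N ! 0"
    using nz unfolding lam_def by (auto split: if_splits)
  have "0 < length (eigs_desc N)" using len by (simp only: Suc_le_eq One_nat_def)
  hence "eigs_desc N ! 0 \<in> set (eigs_desc N)" by (rule nth_mem)
  hence "lam N 1 \<in> set (eigs_desc N)" using l by simp
  hence "lam N 1 \<in># proots (char_poly N)" unfolding eigs_desc_def by simp
  hence "poly (char_poly N) (lam N 1) = 0" using cp0 by simp
  thus ?thesis using eigenvalue_root_char_poly[OF N] by simp
qed



lemma spec:
  fixes N :: "real mat"
  assumes N: "N \<in> carrier_mat n n"
    and sym: "\<And>y z. y \<in> carrier_vec n \<Longrightarrow> z \<in> carrier_vec n \<Longrightarrow> y \<bullet> (N *\<^sub>v z) = z \<bullet> (N *\<^sub>v y)"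
    and x: "x \<in> carrier_vec n"
  shows "x \<bullet> (N *\<^sub>v x) \<le> lam N 1 * (x \<bullet> x)"
proof (cases "n = 0")
  case True
  then have "x \<bullet> x = 0" "x \<bullet> (N *\<^sub>v x) = 0" using x N by (auto simp: scalar_prod_def)
  thus ?thesis by simp
next
  case False
  define S where "S = {y \<bullet> (N *\<^sub>v y) | y. y \<in> carrier_vec n \<and> y \<bullet> y = 1}"
  define c where "c = sqrt (fro N)"
  have uc: "(unit_vec n 0 :: real vec) \<in> carrier_vec n" by simp
  have "(unit_vec n 0 :: real vec) \<bullet> unit_vec n 0 = unit_vec n 0 $ 0" using False by (intro scalar_prod_left_unit[OF uc]) simp
  also have "\<dots> = 1" using False by simp
  finally have "(unit_vec n 0 :: real vec) \<bullet> unit_vec n 0 = 1" .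
  hence Sne: "S \<noteq> {}" unfolding S_def by (auto intro!: exI[of _ "unit_vec n 0"])
  have Sbd: "s \<le> c" if "s \<in> S" for s
  proof -
    from that obtain y where y: "y \<in> carrier_vec n" "y \<bullet> y = 1" "s = y \<bullet> (N *\<^sub>v y)"
      unfolding S_def by auto
    have "\<bar>s\<bar> \<le> c" using qf_abs_bound[OF N y(1)] y unfolding c_def by simp
    thus ?thesis by simp
  qed
  hence bdd: "bdd_above S" unfolding bdd_above_def by blast
  define l where "l = Sup S"
  have P1: "y \<bullet> (N *\<^sub>v y) \<le> l * (y \<bullet> y)" if y: "y \<in> carrier_vec n" for y
  proof (cases "y \<bullet> y = 0")
    case True
    have "\<bar>y \<bullet> (N *\<^sub>v y)\<bar> \<le> 0" using qf_abs_bound[OF N y] True by simp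
    thus ?thesis using True by simp
  next
    case False
    hence pos: "0 < y \<bullet> y" using sp_self_nonneg[of y] by simp
    define z where "z = (1 / sqrt (y \<bullet> y)) \<cdot>\<^sub>v y"
    have z: "z \<in> carrier_vec n" unfolding z_def using y by simp
    have zz: "z \<bullet> z = 1" unfolding z_def using y pos
      by (simp add: scalar_prod_smult_distrib[of _ n] smult_scalar_prod_distrib[of _ n])
    have zN: "z \<bullet> (N *\<^sub>v z) = (y \<bullet> (N *\<^sub>v y)) / (y \<bullet> y)" unfolding z_def using y pos N
      by (simp add: mult_mat_vec[OF N y] scalar_prod_smult_distrib[of _ n] smult_scalar_prod_distrib[of _ n])
    have "z \<bullet> (N *\<^sub>v z) \<in> S" unfolding S_def using z zz by auto
    hence "z \<bullet> (N *\<^sub>v z) \<le> l" unfolding l_def using bdd by (rule cSup_upper)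
    thus ?thesis unfolding zN using pos by (simp add: divide_le_eq mult.commute)
  qed
  have P2: "\<exists>y \<in> carrier_vec n. y \<bullet> y = 1 \<and> l - e < y \<bullet> (N *\<^sub>v y)" if e: "e > 0" for e
  proof -
    have "l - e < Sup S" unfolding l_def using e by simp
    then obtain s where "s \<in> S" "l - e < s" using less_cSup_iff[OF Sne bdd] by auto
    thus ?thesis unfolding S_def by auto
  qed
  define K where "K = char_matrix N l"
  have Kc: "K \<in> carrier_mat n n" unfolding K_def using N by simp
  have Ky: "K *\<^sub>v y = N *\<^sub>v y - l \<cdot>\<^sub>v y" if "y \<in> carrier_vec n" for y
    unfolding K_def by (rule char_matrix_mult[OF N that])
  have Kq: "y \<bullet> (K *\<^sub>v z) = y \<bullet> (N *\<^sub>v z) - l * (y \<bullet> z)"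
    if y: "y \<in> carrier_vec n" and z: "z \<in> carrier_vec n" for y z
    using y z N by (simp add: Ky[OF z] scalar_prod_minus_distrib[of _ n] scalar_prod_smult_distrib[of _ n])
  have Ksym: "y \<bullet> (K *\<^sub>v z) = z \<bullet> (K *\<^sub>v y)"
    if y: "y \<in> carrier_vec n" and z: "z \<in> carrier_vec n" for y z
    using Kq[OF y z] Kq[OF z y] sym[OF y z] comm_scalar_prod[OF y z] by simp
  have Kneg: "y \<bullet> (K *\<^sub>v y) \<le> 0" if y: "y \<in> carrier_vec n" for y
    using Kq[OF y y] P1[OF y] by simp
  define c2 where "c2 = sqrt (fro K)"
  have c2nn: "0 \<le> c2" unfolding c2_def using fro_nonneg by simp
  have P3: "(K *\<^sub>v y) \<bullet> (K *\<^sub>v y) \<le> (c2 + 1) * (- (y \<bullet> (K *\<^sub>v y)))"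
    if y: "y \<in> carrier_vec n" for y
  proof -
    define z where "z = K *\<^sub>v y"
    have z: "z \<in> carrier_vec n" unfolding z_def using Kc y by simp
    define s where "s = 1 / (c2 + 1)"
    have s0: "0 < s" unfolding s_def using c2nn by simp
    have sc: "s * c2 \<le> 1" unfolding s_def using c2nn by (simp add: field_simps)
    have Kz: "K *\<^sub>v (y + s \<cdot>\<^sub>v z) = K *\<^sub>v y + s \<cdot>\<^sub>v (K *\<^sub>v z)"
      using Kc y z by (simp add: mult_add_distrib_mat_vec[of _ n n] mult_mat_vec[OF Kc z])
    have yz: "y \<bullet> (K *\<^sub>v z) = z \<bullet> z" using Ksym[OF y z] unfolding z_def by simp
    have exp: "(y + s \<cdot>\<^sub>v z) \<bullet> (K *\<^sub>v (y + s \<cdot>\<^sub>v z))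
        = y \<bullet> (K *\<^sub>v y) + 2 * s * (z \<bullet> z) + s^2 * (z \<bullet> (K *\<^sub>v z))"
      unfolding Kz using y z Kc yz
      by (simp add: add_scalar_prod_distrib[of _ n] scalar_prod_add_distrib[of _ n]
          scalar_prod_smult_distrib[of _ n] smult_scalar_prod_distrib[of _ n] z_def[symmetric]
          power2_eq_square algebra_simps)
    have "(y + s \<cdot>\<^sub>v z) \<bullet> (K *\<^sub>v (y + s \<cdot>\<^sub>v z)) \<le> 0" using y z by (intro Kneg) auto
    hence A1: "y \<bullet> (K *\<^sub>v y) + 2 * s * (z \<bullet> z) + s^2 * (z \<bullet> (K *\<^sub>v z)) \<le> 0" using exp by simp
    have "\<bar>z \<bullet> (K *\<^sub>v z)\<bar> \<le> c2 * (z \<bullet> z)" unfolding c2_def by (rule qf_abs_bound[OF Kc z])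
    hence A2: "- (c2 * (z \<bullet> z)) \<le> z \<bullet> (K *\<^sub>v z)" by simp
    have zz0: "0 \<le> z \<bullet> z" by (rule sp_self_nonneg)
    have "s^2 * (- (c2 * (z \<bullet> z))) \<le> s^2 * (z \<bullet> (K *\<^sub>v z))"
      using A2 by (intro mult_left_mono) auto
    moreover have "s^2 * (c2 * (z \<bullet> z)) \<le> s * (z \<bullet> z)"
    proof -
      have "s^2 * (c2 * (z \<bullet> z)) = s * ((s * c2) * (z \<bullet> z))" by (simp add: power2_eq_square)
      also have "\<dots> \<le> s * (1 * (z \<bullet> z))"
        using sc s0 zz0 by (intro mult_left_mono mult_right_mono) auto
      finally show ?thesis by simp
    qed
    ultimately have "y \<bullet> (K *\<^sub>v y) + s * (z \<bullet> z) \<le> 0" using A1 by simp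
    hence "s * (z \<bullet> z) \<le> - (y \<bullet> (K *\<^sub>v y))" by simp
    hence "(c2 + 1) * (s * (z \<bullet> z)) \<le> (c2 + 1) * (- (y \<bullet> (K *\<^sub>v y)))"
      using c2nn by (intro mult_left_mono) auto
    moreover have "(c2 + 1) * (s * (z \<bullet> z)) = z \<bullet> z" unfolding s_def using c2nn by simp
    ultimately have "z \<bullet> z \<le> (c2 + 1) * (- (y \<bullet> (K *\<^sub>v y)))" by simp
    thus ?thesis by (simp add: z_def)
  qed
  have eig: "eigenvalue N l"
  proof (rule ccontr)
    assume ne: "\<not> eigenvalue N l"
    have "det K \<noteq> 0"
    proof
      assume "det K = 0"
      then obtain v where v: "v \<in> carrier_vec n" "v \<noteq> 0\<^sub>v n" "K *\<^sub>v v = 0\<^sub>v n"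
        using det_0_iff_vec_prod_zero[OF Kc] by auto
      hence "eigenvector N v l" using eigenvector_char_matrix[OF N] unfolding K_def by auto
      thus False using ne unfolding eigenvalue_def by auto
    qed
    from det_non_zero_imp_unit[OF Kc this, unfolded Units_def, of "()"]
    obtain B where B: "B \<in> carrier_mat n n" "B * K = 1\<^sub>m n" by (auto simp: ring_mat_def)
    define e where "e = 1 / ((fro B + 1) * (c2 + 1))"
    have fB: "0 \<le> fro B" by (rule fro_nonneg)
    have e0: "0 < e" unfolding e_def using fB c2nn by simp
    obtain y where y: "y \<in> carrier_vec n" "y \<bullet> y = 1" "l - e < y \<bullet> (N *\<^sub>v y)"
      using P2[OF e0] by auto
    have yK: "y \<bullet> (K *\<^sub>v y) = y \<bullet> (N *\<^sub>v y) - l" using Kq[OF y(1) y(1)] y(2) by simp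
    have yB: "B *\<^sub>v (K *\<^sub>v y) = y"
      using B Kc y(1) by (simp add: assoc_mult_mat_vec[symmetric, of B n n K n])
    have Kyc: "K *\<^sub>v y \<in> carrier_vec n" using Kc y(1) by simp
    have "1 = y \<bullet> y" using y by simp
    also have "\<dots> \<le> fro B * ((K *\<^sub>v y) \<bullet> (K *\<^sub>v y))"
      using mat_vec_bound_sq[OF B(1) Kyc] yB by simp
    also have "\<dots> \<le> fro B * ((c2 + 1) * (- (y \<bullet> (K *\<^sub>v y))))"
      by (rule mult_left_mono[OF P3[OF y(1)] fB])
    also have "\<dots> \<le> (fro B + 1) * ((c2 + 1) * (- (y \<bullet> (K *\<^sub>v y))))"
      using Kneg[OF y(1)] c2nn by (intro mult_right_mono) (auto simp: mult_nonneg_nonpos)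
    also have "\<dots> < (fro B + 1) * ((c2 + 1) * e)"
      using yK y(3) fB c2nn by (intro mult_strict_left_mono) auto
    also have "\<dots> = 1" unfolding e_def using fB c2nn by simp
    finally show False by simp
  qed
  have "l \<le> lam N 1" by (rule root_le_lam[OF N eig])
  hence "l * (x \<bullet> x) \<le> lam N 1 * (x \<bullet> x)" using sp_self_nonneg[of x] by (rule mult_right_mono)
  thus ?thesis using P1[OF x] by simp
qed

lemma tr_lemma:
  fixes A :: "real mat"
  assumes A: "A \<in> carrier_mat r c" and y: "y \<in> carrier_vec c" and u: "u \<in> carrier_vec r"
  shows "y \<bullet> (transpose_mat A *\<^sub>v u) = (A *\<^sub>v y) \<bullet> u"
proof -
  have "(transpose_mat A *\<^sub>v u) \<bullet> y = u \<bullet> (A *\<^sub>v y)" by (rule transpose_vec_mult_scalar[OF A y u])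
  moreover have "y \<bullet> (transpose_mat A *\<^sub>v u) = (transpose_mat A *\<^sub>v u) \<bullet> y"
    using A y u by (intro comm_scalar_prod[of _ c]) auto
  moreover have "u \<bullet> (A *\<^sub>v y) = (A *\<^sub>v y) \<bullet> u"
    using A y u by (intro comm_scalar_prod[of _ r]) auto
  ultimately show ?thesis by simp
qed

lemma vnorm_smult: "vnorm (c \<cdot>\<^sub>v v) = \<bar>c\<bar> * vnorm (v::real vec)"
proof -
  have "(c \<cdot>\<^sub>v v) \<bullet> (c \<cdot>\<^sub>v v) = c^2 * (v \<bullet> v)"
    by (simp add: scalar_prod_smult_left scalar_prod_smult_right power2_eq_square)
  thus ?thesis unfolding vnorm_def by (simp add: real_sqrt_mult)
qed

lemma sp_zero:
  assumes v: "(v::real vec) \<in> carrier_vec n" and z: "v \<bullet> v = 0"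
  shows "v = 0\<^sub>v n"
proof -
  have dv: "dim_vec v = n" using v by simp
  have "(\<Sum>i=0..<n. v$i * v$i) = 0" using z unfolding scalar_prod_def dv .
  hence "\<forall>i\<in>{0..<n}. v$i * v$i = 0" by (subst sum_nonneg_eq_0_iff[symmetric]) auto
  thus ?thesis using dv by (intro eq_vecI) auto
qed

lemma outer_carrier: "outer a b \<in> carrier_mat (dim_vec a) (dim_vec b)"
  unfolding outer_def by simp

lemma resid_carrier:
  assumes X: "X \<in> carrier_mat d n" and Y: "Y \<in> carrier_vec n"
    and W: "W \<in> carrier_mat m d" and A: "A \<in> carrier_vec m"
  shows "Resid m X Y W A \<in> carrier_vec n"
  unfolding Resid_def Fout_def using X Y W A by auto

lemma dims:
  assumes X: "X \<in> carrier_mat d n" and Y: "Y \<in> carrier_vec n"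
    and A0: "A 0 \<in> carrier_vec m" and W0: "W 0 \<in> carrier_mat m d"
    and As: "\<forall>t. A (Suc t) = A t - (2 * \<eta> / (real n * sqrt (real m))) \<cdot>\<^sub>v
                          (W t * X *\<^sub>v Resid m X Y (W t) (A t))"
    and Ws: "\<forall>t. W (Suc t) = W t - (2 * \<eta> / (real n * sqrt (real m))) \<cdot>\<^sub>m
                          (outer (A t) (Resid m X Y (W t) (A t)) * transpose_mat X)"
  shows "A t \<in> carrier_vec m \<and> W t \<in> carrier_mat m d"
proof (induction t)
  case 0
  then show ?case using A0 W0 by simp
next
  case (Suc t)
  hence At: "A t \<in> carrier_vec m" and Wt: "W t \<in> carrier_mat m d" by auto
  have D: "Resid m X Y (W t) (A t) \<in> carrier_vec n" by (rule resid_carrier[OF X Y Wt At])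
  have O: "outer (A t) (Resid m X Y (W t) (A t)) \<in> carrier_mat m n"
    using outer_carrier[of "A t" "Resid m X Y (W t) (A t)"] At D by simp
  have P: "outer (A t) (Resid m X Y (W t) (A t)) * transpose_mat X \<in> carrier_mat m d"
    using O X by (intro mult_carrier_mat[of _ m n]) auto
  have "A (Suc t) \<in> carrier_vec m" using As At Wt X D by simp
  moreover have "W (Suc t) \<in> carrier_mat m d" using Ws by (simp add: minus_carrier_mat[OF smult_carrier_mat[OF P]])
  ultimately show ?case by simp
qed

lemma gram_bilin:
  assumes X: "X \<in> carrier_mat d n" and W: "W \<in> carrier_mat m d"
    and y: "y \<in> carrier_vec n" and z: "z \<in> carrier_vec n"
  shows "y \<bullet> (GramM m n X W A *\<^sub>v z) = (2 / (real m * real n)) *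
     ((vnorm A)^2 * ((X *\<^sub>v y) \<bullet> (X *\<^sub>v z)) + (W *\<^sub>v (X *\<^sub>v y)) \<bullet> (W *\<^sub>v (X *\<^sub>v z)))"
proof -
  let ?k = "2 / (real m * real n)" and ?a = "(vnorm A)^2"
  let ?G = "transpose_mat X * X" and ?H = "transpose_mat X * transpose_mat W * W * X"
  have XT: "transpose_mat X \<in> carrier_mat n d" using X by simp
  have WT: "transpose_mat W \<in> carrier_mat d m" using W by simp
  have Gc: "?G \<in> carrier_mat n n" using X by simp
  have XTWT: "transpose_mat X * transpose_mat W \<in> carrier_mat n m" using XT WT by (rule mult_carrier_mat)
  have XTWTW: "transpose_mat X * transpose_mat W * W \<in> carrier_mat n d" using XTWT W by (rule mult_carrier_mat)
  have Hc: "?H \<in> carrier_mat n n" using XTWTW X by (rule mult_carrier_mat)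
  have Xz: "X *\<^sub>v z \<in> carrier_vec d" using X z by simp
  have WXz: "W *\<^sub>v (X *\<^sub>v z) \<in> carrier_vec m" using W Xz by simp
  have Xy: "X *\<^sub>v y \<in> carrier_vec d" using X y by simp
  have G1: "?G *\<^sub>v z = transpose_mat X *\<^sub>v (X *\<^sub>v z)"
    by (rule assoc_mult_mat_vec[OF XT X z])
  have H1: "?H *\<^sub>v z = transpose_mat X *\<^sub>v (transpose_mat W *\<^sub>v (W *\<^sub>v (X *\<^sub>v z)))"
  proof -
    have "?H *\<^sub>v z = (transpose_mat X * transpose_mat W * W) *\<^sub>v (X *\<^sub>v z)"
      by (rule assoc_mult_mat_vec[OF XTWTW X z])
    also have "\<dots> = (transpose_mat X * transpose_mat W) *\<^sub>v (W *\<^sub>v (X *\<^sub>v z))"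
      by (rule assoc_mult_mat_vec[OF XTWT W Xz])
    also have "\<dots> = transpose_mat X *\<^sub>v (transpose_mat W *\<^sub>v (W *\<^sub>v (X *\<^sub>v z)))"
      by (rule assoc_mult_mat_vec[OF XT WT WXz])
    finally show ?thesis .
  qed
  have M: "GramM m n X W A *\<^sub>v z = ?k \<cdot>\<^sub>v (?a \<cdot>\<^sub>v (?G *\<^sub>v z) + ?H *\<^sub>v z)"
  proof -
    have "GramM m n X W A *\<^sub>v z = ?k \<cdot>\<^sub>v ((?a \<cdot>\<^sub>m ?G + ?H) *\<^sub>v z)"
      unfolding GramM_def using Gc Hc z by (intro smult_mat_mult_vec[of _ n n]) auto
    also have "(?a \<cdot>\<^sub>m ?G + ?H) *\<^sub>v z = (?a \<cdot>\<^sub>m ?G) *\<^sub>v z + ?H *\<^sub>v z"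
      using Gc Hc z by (intro add_mult_distrib_mat_vec[of _ n n]) auto
    also have "(?a \<cdot>\<^sub>m ?G) *\<^sub>v z = ?a \<cdot>\<^sub>v (?G *\<^sub>v z)"
      using Gc z by (rule smult_mat_mult_vec)
    finally show ?thesis .
  qed
  have Gzc: "?G *\<^sub>v z \<in> carrier_vec n" using Gc z by simp
  have Hzc: "?H *\<^sub>v z \<in> carrier_vec n" using Hc z by simp
  have "y \<bullet> (GramM m n X W A *\<^sub>v z) = ?k * (?a * (y \<bullet> (?G *\<^sub>v z)) + y \<bullet> (?H *\<^sub>v z))"
    unfolding M using y Gzc Hzc
    by (simp add: scalar_prod_smult_distrib[of _ n] scalar_prod_add_distrib[of _ n])
  also have "y \<bullet> (?G *\<^sub>v z) = (X *\<^sub>v y) \<bullet> (X *\<^sub>v z)"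
    unfolding G1 by (rule tr_lemma[OF X y Xz])
  also have "y \<bullet> (?H *\<^sub>v z) = (W *\<^sub>v (X *\<^sub>v y)) \<bullet> (W *\<^sub>v (X *\<^sub>v z))"
  proof -
    have WTv: "transpose_mat W *\<^sub>v (W *\<^sub>v (X *\<^sub>v z)) \<in> carrier_vec d" using WT WXz by simp
    have "y \<bullet> (?H *\<^sub>v z) = (X *\<^sub>v y) \<bullet> (transpose_mat W *\<^sub>v (W *\<^sub>v (X *\<^sub>v z)))"
      unfolding H1 by (rule tr_lemma[OF X y WTv])
    also have "\<dots> = (W *\<^sub>v (X *\<^sub>v y)) \<bullet> (W *\<^sub>v (X *\<^sub>v z))"
      by (rule tr_lemma[OF W Xy WXz])
    finally show ?thesis .
  qed
  finally show ?thesis .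
qed

lemma gram_carrier:
  assumes X: "X \<in> carrier_mat d n" and W: "W \<in> carrier_mat m d"
  shows "GramM m n X W A \<in> carrier_mat n n"
proof -
  have XT: "transpose_mat X \<in> carrier_mat n d" using X by simp
  have WT: "transpose_mat W \<in> carrier_mat d m" using W by simp
  have XTWT: "transpose_mat X * transpose_mat W \<in> carrier_mat n m" using XT WT by (rule mult_carrier_mat)
  have XTWTW: "transpose_mat X * transpose_mat W * W \<in> carrier_mat n d" using XTWT W by (rule mult_carrier_mat)
  have Hc: "transpose_mat X * transpose_mat W * W * X \<in> carrier_mat n n" using XTWTW X by (rule mult_carrier_mat)
  have Gc: "transpose_mat X * X \<in> carrier_mat n n" using XT X by (rule mult_carrier_mat)
  show ?thesis unfolding GramM_def
    by (intro smult_carrier_mat add_carrier_mat Hc Gc)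
qed

lemma vnorm_Y:
  assumes Y: "Y \<in> carrier_vec n" and pm: "\<forall>i<n. Y $ i = 1 \<or> Y $ i = -1"
  shows "vnorm Y = sqrt (real n)"
proof -
  have "Y \<bullet> Y = (\<Sum>i=0..<n. Y$i * Y$i)" using Y unfolding scalar_prod_def by simp
  also have "\<dots> = (\<Sum>i=0..<n. 1)" using pm by (intro sum.cong) auto
  finally show ?thesis unfolding vnorm_def by simp
qed

lemma key:
  fixes X :: "real mat" and Y :: "real vec" and A :: "nat \<Rightarrow> real vec" and W :: "nat \<Rightarrow> real mat"
  assumes n1: "n \<ge> 1"
    and X: "X \<in> carrier_mat d n" and Y: "Y \<in> carrier_vec n" and pm: "\<forall>i<n. Y $ i = 1 \<or> Y $ i = -1"
    and A0: "A 0 \<in> carrier_vec m" and W0: "W 0 \<in> carrier_mat m d"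
    and As: "\<forall>t. A (Suc t) = A t - (2 * \<eta> / (real n * sqrt (real m))) \<cdot>\<^sub>v
                          (W t * X *\<^sub>v Resid m X Y (W t) (A t))"
    and Ws: "\<forall>t. W (Suc t) = W t - (2 * \<eta> / (real n * sqrt (real m))) \<cdot>\<^sub>m
                          (outer (A t) (Resid m X Y (W t) (A t)) * transpose_mat X)"
    and eta: "\<eta> > 0" and c2: "c2 > 0" and beta: "\<beta> > 0"
    and sharp: "\<forall>t. lambda_max (GramM m n X (W t) (A t)) \<le> 4 / \<eta> * (1 - \<beta>)"
    and c5: "c5 < 2 * \<beta>"
    and mbig: "real m > \<eta> * c2 / (2 * \<beta> - c5)"
  shows "vnorm (Resid m X Y (W t) (A t))
      \<le> (if 0 < lam (transpose_mat X * X) 1 / real n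
          then 2 / (\<eta> * sqrt (lam (transpose_mat X * X) 1 / real n)) + 1 else 1) * sqrt (real n * real m)"
proof -
  have "0 < \<eta> * c2 / (2 * \<beta> - c5)" using eta c2 c5 by simp
  hence m0: "0 < real m" using mbig by linarith
  hence m1: "1 \<le> real m" by simp
  have n0: "0 < real n" using n1 by simp
  obtain At Wt where At: "At \<in> carrier_vec m" and Wt: "Wt \<in> carrier_mat m d"
    and AtD: "At = A t" and WtD: "Wt = W t"
    using dims[OF X Y A0 W0 As Ws, of t] by auto
  define G where "G = transpose_mat X * X"
  define l1 where "l1 = lam G 1"
  define K where "K = 2 * real m * real n / \<eta>"
  define a where "a = (vnorm At)^2"
  have K0: "0 < K" unfolding K_def using m0 n0 eta by simp
  have a0: "0 \<le> a" unfolding a_def by simp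
  have Gc: "G \<in> carrier_mat n n" unfolding G_def using X by simp
  have Mc: "GramM m n X Wt At \<in> carrier_mat n n" by (rule gram_carrier[OF X Wt])
  have Msym: "y \<bullet> (GramM m n X Wt At *\<^sub>v z) = z \<bullet> (GramM m n X Wt At *\<^sub>v y)"
    if y: "y \<in> carrier_vec n" and z: "z \<in> carrier_vec n" for y z
  proof -
    have "(X *\<^sub>v y) \<bullet> (X *\<^sub>v z) = (X *\<^sub>v z) \<bullet> (X *\<^sub>v y)"
      using X y z by (intro comm_scalar_prod[of _ d]) auto
    moreover have "(Wt *\<^sub>v (X *\<^sub>v y)) \<bullet> (Wt *\<^sub>v (X *\<^sub>v z)) = (Wt *\<^sub>v (X *\<^sub>v z)) \<bullet> (Wt *\<^sub>v (X *\<^sub>v y))"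
      using X Wt y z by (intro comm_scalar_prod[of _ m]) auto
    ultimately show ?thesis using gram_bilin[OF X Wt y z] gram_bilin[OF X Wt z y] by simp
  qed
  have lmax: "lambda_max (GramM m n X Wt At) \<le> 4 / \<eta>"
    using sharp[rule_format, of t] AtD WtD eta beta by (auto simp: field_simps)
  have bound: "a * ((X *\<^sub>v v) \<bullet> (X *\<^sub>v v)) + (Wt *\<^sub>v (X *\<^sub>v v)) \<bullet> (Wt *\<^sub>v (X *\<^sub>v v)) \<le> K * (v \<bullet> v)"
    if v: "v \<in> carrier_vec n" for v
  proof -
    let ?q = "a * ((X *\<^sub>v v) \<bullet> (X *\<^sub>v v)) + (Wt *\<^sub>v (X *\<^sub>v v)) \<bullet> (Wt *\<^sub>v (X *\<^sub>v v))"
    have "(2 / (real m * real n)) * ?q = v \<bullet> (GramM m n X Wt At *\<^sub>v v)"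
      using gram_bilin[OF X Wt v v] unfolding a_def by simp
    also have "\<dots> \<le> lam (GramM m n X Wt At) 1 * (v \<bullet> v)" by (rule spec[OF Mc Msym v])
    also have "\<dots> \<le> (4 / \<eta>) * (v \<bullet> v)"
      using lmax sp_self_nonneg[of v] unfolding lambda_max_def by (intro mult_right_mono) auto
    finally have "(2 / (real m * real n)) * ?q \<le> (4 / \<eta>) * (v \<bullet> v)" .
    hence "(real m * real n / 2) * ((2 / (real m * real n)) * ?q) \<le> (real m * real n / 2) * ((4 / \<eta>) * (v \<bullet> v))"
      using m0 n0 by (intro mult_left_mono) auto
    moreover have "(real m * real n / 2) * ((2 / (real m * real n)) * ?q) = ?q" using m0 n0 by simp
    moreover have "(real m * real n / 2) * ((4 / \<eta>) * (v \<bullet> v)) = K * (v \<bullet> v)"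
      unfolding K_def using eta by (simp add: field_simps)
    ultimately show ?thesis by simp
  qed
  have Rb: "vnorm (Wt *\<^sub>v (X *\<^sub>v v)) \<le> sqrt K * vnorm v" if v: "v \<in> carrier_vec n" for v
  proof -
    have "(Wt *\<^sub>v (X *\<^sub>v v)) \<bullet> (Wt *\<^sub>v (X *\<^sub>v v)) \<le> K * (v \<bullet> v)"
      using bound[OF v] a0 sp_self_nonneg[of "X *\<^sub>v v"]
      by (smt (verit) mult_nonneg_nonneg)
    hence "sqrt ((Wt *\<^sub>v (X *\<^sub>v v)) \<bullet> (Wt *\<^sub>v (X *\<^sub>v v))) \<le> sqrt (K * (v \<bullet> v))"
      by (rule real_sqrt_le_mono)
    thus ?thesis unfolding vnorm_def by (simp add: real_sqrt_mult)
  qed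
  define w where "w = transpose_mat Wt *\<^sub>v At"
  define z where "z = transpose_mat X *\<^sub>v w"
  have wc: "w \<in> carrier_vec d" unfolding w_def using Wt At by simp
  have zc: "z \<in> carrier_vec n" unfolding z_def using X wc by simp
  have Xzc: "X *\<^sub>v z \<in> carrier_vec d" using X zc by simp
  have F: "Fout m X Wt At = (1 / sqrt (real m)) \<cdot>\<^sub>v z"
    unfolding Fout_def z_def w_def using X Wt At
    by (subst assoc_mult_mat_vec[of _ n d _ m]) auto
  have Fc: "Fout m X Wt At \<in> carrier_vec n" unfolding F using zc by simp
  have zz: "z \<bullet> z = (X *\<^sub>v z) \<bullet> w" using tr_lemma[OF X zc wc] unfolding z_def .
  have zz2: "z \<bullet> z = (Wt *\<^sub>v (X *\<^sub>v z)) \<bullet> At" unfolding zz w_def by (rule tr_lemma[OF Wt Xzc At])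
  have zA: "vnorm z \<le> sqrt K * vnorm At"
  proof -
    have "(vnorm z)^2 = z \<bullet> z" by (rule vnorm_sq)
    also have "\<dots> \<le> vnorm (Wt *\<^sub>v (X *\<^sub>v z)) * vnorm At"
      unfolding zz2 using cs[of "Wt *\<^sub>v (X *\<^sub>v z)" m At] Wt Xzc At by simp
    also have "\<dots> \<le> (sqrt K * vnorm z) * vnorm At"
      by (rule mult_right_mono[OF Rb[OF zc] vnorm_nonneg])
    finally have *: "vnorm z * vnorm z \<le> vnorm z * (sqrt K * vnorm At)"
      by (simp add: power2_eq_square algebra_simps)
    show ?thesis
    proof (cases "vnorm z = 0")
      case True thus ?thesis using K0 vnorm_nonneg[of At] by simp
    next
      case False
      hence "0 < vnorm z" using vnorm_nonneg[of z] by simp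
      thus ?thesis using * by simp
    qed
  qed
  have D: "Resid m X Y Wt At = Fout m X Wt At - Y" unfolding Resid_def ..
  have Dle: "vnorm (Resid m X Y Wt At) \<le> vnorm (Fout m X Wt At) + sqrt (real n)"
    unfolding D using vnorm_triangle_minus[OF Fc Y] vnorm_Y[OF Y pm] by simp
  have vF: "vnorm (Fout m X Wt At) = vnorm z / sqrt (real m)"
    unfolding F vnorm_smult by simp
  have sn: "sqrt (real n) \<le> sqrt (real n * real m)"
    using m1 n0 by (intro real_sqrt_le_mono) simp
  show ?thesis
  proof (cases "0 < l1")
    case True
    have pos: "0 < lam (transpose_mat X * X) 1 / real n" using True n0 unfolding l1_def G_def by simp
    have "eigenvalue G l1" unfolding l1_def using lam_pos_eigen[OF Gc] True unfolding l1_def by simp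
    then obtain u where u: "eigenvector G u l1" unfolding eigenvalue_def by auto
    hence uc: "u \<in> carrier_vec n" and u0: "u \<noteq> 0\<^sub>v n" and Gu: "G *\<^sub>v u = l1 \<cdot>\<^sub>v u"
      unfolding eigenvector_def using Gc by auto
    have uu: "0 < u \<bullet> u" using sp_zero[OF uc] u0 sp_self_nonneg[of u] by fastforce
    have Qu: "(X *\<^sub>v u) \<bullet> (X *\<^sub>v u) = l1 * (u \<bullet> u)"
    proof -
      have "(X *\<^sub>v u) \<bullet> (X *\<^sub>v u) = u \<bullet> (transpose_mat X *\<^sub>v (X *\<^sub>v u))"
        using X uc by (intro tr_lemma[symmetric]) auto
      also have "\<dots> = u \<bullet> (G *\<^sub>v u)" unfolding G_def using X uc by simp
      also have "\<dots> = l1 * (u \<bullet> u)" unfolding Gu using uc by (simp add: scalar_prod_smult_distrib[of _ n])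
      finally show ?thesis .
    qed
    have "a * (l1 * (u \<bullet> u)) \<le> K * (u \<bullet> u)"
      using bound[OF uc] sp_self_nonneg[of "Wt *\<^sub>v (X *\<^sub>v u)"] unfolding Qu by linarith
    hence "(a * l1) * (u \<bullet> u) \<le> K * (u \<bullet> u)" by (simp add: mult.assoc)
    hence al: "a * l1 \<le> K" using uu by simp
    have aK: "a \<le> K / l1" using al True by (simp add: le_divide_eq)
    have vA: "vnorm At \<le> sqrt (K / l1)"
    proof -
      have "vnorm At = sqrt a" unfolding a_def using vnorm_nonneg[of At] by simp
      thus ?thesis using aK by (simp add: real_sqrt_le_mono)
    qed
    have "vnorm z \<le> sqrt K * sqrt (K / l1)"
      using zA vA K0 by (smt (verit) mult_left_mono real_sqrt_ge_zero)
    also have "sqrt K * sqrt (K / l1) = K / sqrt l1"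
      using K0 True by (simp add: real_sqrt_divide real_sqrt_mult[symmetric] power2_eq_square[symmetric])
    finally have vz: "vnorm z \<le> K / sqrt l1" .
    define sm where "sm = sqrt (real m)"
    define sq where "sq = sqrt (real n)"
    define sl where "sl = sqrt l1"
    have sm0: "0 < sm" unfolding sm_def using m0 by simp
    have sq0: "0 < sq" unfolding sq_def using n0 by simp
    have sl0: "0 < sl" unfolding sl_def using True by simp
    have mm: "real m = sm * sm" unfolding sm_def using m0 by simp
    have nn: "real n = sq * sq" unfolding sq_def using n0 by simp
    have e1: "sqrt (l1 / real n) = sl / sq" unfolding sl_def sq_def by (simp add: real_sqrt_divide)
    have e2: "sqrt (real n * real m) = sq * sm" unfolding sq_def sm_def by (simp add: real_sqrt_mult)
    have "vnorm (Resid m X Y Wt At) \<le> (K / sl) / sm + sq"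
      using Dle vF vz sm0 unfolding sl_def sm_def sq_def by (smt (verit) divide_right_mono)
    also have "(K / sl) / sm = 2 / (\<eta> * (sl / sq)) * (sq * sm)"
      unfolding K_def mm nn using sm0 sq0 sl0 eta by (simp add: field_simps)
    also have "sq \<le> sq * sm" using sn e2 unfolding sq_def by simp
    hence "2 / (\<eta> * (sl / sq)) * (sq * sm) + sq \<le> 2 / (\<eta> * (sl / sq)) * (sq * sm) + sq * sm" by simp
    also have "\<dots> = (2 / (\<eta> * sqrt (l1 / real n)) + 1) * sqrt (real n * real m)"
      unfolding e1 e2 by (simp add: algebra_simps)
    finally show ?thesis using pos unfolding AtD WtD l1_def G_def by simp
  next
    case False
    have Q0: "(X *\<^sub>v v) \<bullet> (X *\<^sub>v v) = 0" if v: "v \<in> carrier_vec n" for v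
    proof -
      have Gsym: "y \<bullet> (G *\<^sub>v z) = z \<bullet> (G *\<^sub>v y)"
        if y: "y \<in> carrier_vec n" and z: "z \<in> carrier_vec n" for y z
      proof -
        have "y \<bullet> (G *\<^sub>v z) = (X *\<^sub>v y) \<bullet> (X *\<^sub>v z)"
          unfolding G_def using X y z by (simp add: tr_lemma[of X d n])
        moreover have "z \<bullet> (G *\<^sub>v y) = (X *\<^sub>v z) \<bullet> (X *\<^sub>v y)"
          unfolding G_def using X y z by (simp add: tr_lemma[of X d n])
        ultimately show ?thesis using X y z comm_scalar_prod[of "X *\<^sub>v y" d "X *\<^sub>v z"] by simp
      qed
      have "(X *\<^sub>v v) \<bullet> (X *\<^sub>v v) = v \<bullet> (G *\<^sub>v v)"
        unfolding G_def using X v by (simp add: tr_lemma[of X d n])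
      also have "\<dots> \<le> l1 * (v \<bullet> v)" unfolding l1_def by (rule spec[OF Gc Gsym v])
      also have "\<dots> \<le> 0" using False sp_self_nonneg[of v] by (simp add: mult_nonpos_nonneg)
      finally show ?thesis using sp_self_nonneg[of "X *\<^sub>v v"] by simp
    qed
    have "vnorm (X *\<^sub>v z) = 0" unfolding vnorm_def using Q0[OF zc] by simp
    hence "z \<bullet> z \<le> 0" unfolding zz using cs[OF Xzc wc] by simp
    hence "vnorm z = 0" unfolding vnorm_def using sp_self_nonneg[of z] by simp
    hence "vnorm (Resid m X Y Wt At) \<le> sqrt (real n)" using Dle vF by simp
    also have "\<dots> \<le> 1 * sqrt (real n * real m)" using sn by simp
    finally show ?thesis using False n0 unfolding AtD WtD l1_def G_def by (simp add: divide_pos_pos zero_less_divide_iff)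
  qed
qed

theorem mainTheorem7:
  "\<exists>C :: real \<Rightarrow> real \<Rightarrow> real \<Rightarrow> real.
    \<forall>(m::nat) (d::nat) (n::nat) (X::real mat) (Y::real vec)
      (A::nat \<Rightarrow> real vec) (W::nat \<Rightarrow> real mat) (\<eta>::real) (\<beta>::real) (c2::real) (c5::real).
     even m \<and> d \<ge> 1 \<and> n \<ge> 1 \<and>
     X \<in> carrier_mat d n \<and> Y \<in> carrier_vec n \<and> (\<forall>i<n. Y $ i = 1 \<or> Y $ i = -1) \<and>
     A 0 \<in> carrier_vec m \<and> W 0 \<in> carrier_mat m d \<and>
     (\<forall>t. A (Suc t) = A t - (2 * \<eta> / (real n * sqrt (real m))) \<cdot>\<^sub>v
                          (W t * X *\<^sub>v Resid m X Y (W t) (A t))) \<and>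
     (\<forall>t. W (Suc t) = W t - (2 * \<eta> / (real n * sqrt (real m))) \<cdot>\<^sub>m
                          (outer (A t) (Resid m X Y (W t) (A t)) * transpose_mat X)) \<and>
     transpose_mat (W 0) * W 0 = (real m / real d) \<cdot>\<^sub>m 1\<^sub>m d \<and>
     Fout m X (W 0) (A 0) = 0\<^sub>v n \<and>
     \<eta> > 0 \<and>
     c2 > 0 \<and> (\<forall>t. opnorm (GammaM m n d X (W t)) \<le> c2 / real m) \<and>
     \<beta> > 0 \<and> (\<forall>t. lambda_max (GramM m n X (W t) (A t)) \<le> 4 / \<eta> * (1 - \<beta>)) \<and>
     lam (transpose_mat X * X) 1 \<ge> 2 * lam (transpose_mat X * X) 2 \<and>
     \<eta> * (real d + 1) * lam (transpose_mat X * X) 1 < real n * real d \<and>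
     0 < c5 \<and> c5 < 2 * \<beta> \<and> c5 < real d / (real d + 1) \<and>
     real m > 3 * \<eta> * c2 / (2 * real d / (real d + 1) - 2 * c5) \<and>
     real m > \<eta> * c2 / (2 * \<beta> - c5)
     \<longrightarrow> (\<forall>t. vnorm (Resid m X Y (W t) (A t))
              \<le> C c5 \<eta> (lam (transpose_mat X * X) 1 / real n) * sqrt (real n * real m))"
  apply (rule exI[of _ "\<lambda>c5 \<eta> r. if 0 < r then 2 / (\<eta> * sqrt r) + 1 else 1"])
  apply (intro allI impI)
  apply (elim conjE)
  subgoal for m d n X Y A W \<eta> \<beta> c2 c5 t
    by (rule key[where \<eta>=\<eta> and \<beta>=\<beta> and ?c2.0=c2 and ?c5.0=c5 and n=n and m=m and d=d]) assumption+
  done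

end
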